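(* Let $n\ge4$, $0<\alpha_2,\alpha_3<1$, $\alpha_1=1-\alpha_2-\alpha_3$, $\lambda^*=\big(\frac{n-1+\alpha_1}{n},\frac{\alpha_2}{n},\frac{\alpha_3}{n}\big)$. Then $$\sum_{\substack{i\in I\\ i_2\ge1,\ i_3\ge1}}|l_i(\lambda^* )|\le\frac{5\cdot2^{n+1}}{e\,n(\ln n-1)}\Big(1+\frac{15}{n-3}\Big).$$
   Context: For an integer $n\ge1$ let $I=\{i=(i_1,i_2,i_3)\in\mathbb{Z}_+^3: i_1+i_2+i_3=n\}$ and $l_i(\lambda)=\prod_{s=1}^{3}\frac{1}{i_s!}\prod_{t=0}^{i_s-1}(n\lambda_s-t)$ for $\lambda=(\lambda_1,\lambda_2,\lambda_3)$ (Lagrange fundamental polynomials for the equally spaced nodes $i/n$ of a triangle in barycentric coordinates). *)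

theory Defs
  imports Complex_Main
begin

definition lagr_idx :: "nat \<Rightarrow> (nat \<times> nat \<times> nat) set" where
  "lagr_idx n = {(i1, i2, i3). i1 + i2 + i3 = n}"

definition lagr_factor :: "nat \<Rightarrow> nat \<Rightarrow> real \<Rightarrow> real" where
  "lagr_factor n k x = (\<Prod>t<k. real n * x - real t) / fact k"

text \<open>Lagrange fundamental polynomial l_i(lambda) in barycentric coordinates.\<close>
definition lagr_l :: "nat \<Rightarrow> nat \<times> nat \<times> nat \<Rightarrow> real \<times> real \<times> real \<Rightarrow> real" where
  "lagr_l n i lam = (case i of (i1, i2, i3) \<Rightarrow> case lam of (l1, l2, l3) \<Rightarrow>
      lagr_factor n i1 l1 * lagr_factor n i2 l2 * lagr_factor n i3 l3)"

end

theory Submission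
  imports Defs "HOL-Analysis.Convex"
begin

lemma L1:
  fixes j c :: real
  assumes "j \<ge> 1" "0 \<le> c" "c \<le> j"
  shows "(j - c) * (j + 1) powr c \<le> j * j powr c"
proof -
  have "ln ((j+1)/j) \<le> (j+1)/j - 1" using assms by (intro ln_le_minus_one) auto
  also have "\<dots> = 1/j" using assms by (simp add: field_simps)
  finally have h1: "ln ((j+1)/j) \<le> 1/j" .
  have "1 - c/j \<le> 1 + c * ln (j/(j+1))"
  proof -
    have "ln (j/(j+1)) = - ln ((j+1)/j)" using assms by (simp add: ln_div)
    have "c * ln ((j+1)/j) \<le> c * (1/j)" using h1 assms(2) by (rule mult_left_mono)
    hence "c * ln (j/(j+1)) \<ge> - (c * (1/j))" using \<open>ln (j/(j+1)) = - ln ((j+1)/j)\<close> by simp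
    thus ?thesis by simp
  qed
  also have "\<dots> \<le> exp (c * ln (j/(j+1)))" by (rule exp_ge_add_one_self)
  also have "\<dots> = (j/(j+1)) powr c" using assms by (simp add: powr_def mult.commute)
  also have "\<dots> = j powr c / (j+1) powr c" using assms by (simp add: powr_divide)
  finally have h2: "1 - c/j \<le> j powr c / (j+1) powr c" .
  have pos: "(j+1) powr c > 0" using assms by simp
  have "(1 - c/j) * (j+1) powr c \<le> j powr c"
    using h2 pos by (simp add: le_divide_eq)
  hence "j * ((1 - c/j) * (j+1) powr c) \<le> j * j powr c"
    using assms by (simp add: mult_left_mono)
  moreover have "j * ((1 - c/j) * (j+1) powr c) = (j - c) * (j + 1) powr c"
    using assms by (simp add: field_simps)
  ultimately show ?thesis by simp
qed

lemma L2:
  fixes K p :: real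
  assumes "K \<ge> 1" "0 \<le> p"
  shows "1 + p/(K+1) \<le> (K+1) powr p / K powr p"
proof -
  have "ln (K/(K+1)) \<le> K/(K+1) - 1" using assms by (intro ln_le_minus_one) auto
  also have "\<dots> = - (1/(K+1))" using assms by (simp add: field_simps)
  finally have h1: "ln (K/(K+1)) \<le> - (1/(K+1))" .
  have e: "ln ((K+1)/K) = - ln (K/(K+1))" using assms by (simp add: ln_div)
  have "p * (1/(K+1)) \<le> p * ln ((K+1)/K)" using h1 e assms(2) by (intro mult_left_mono) auto
  hence "1 + p/(K+1) \<le> 1 + p * ln ((K+1)/K)" by simp
  also have "\<dots> \<le> exp (p * ln ((K+1)/K))" by (rule exp_ge_add_one_self)
  also have "\<dots> = ((K+1)/K) powr p" using assms by (simp add: powr_def mult.commute)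
  also have "\<dots> = (K+1) powr p / K powr p" using assms by (simp add: powr_divide)
  finally show ?thesis .
qed

lemma gbound:
  fixes p :: real
  assumes "0 \<le> p" "p < 1" "k \<ge> 1"
  shows "\<bar>\<Prod>t<k. p - real t\<bar> / fact k \<le> p / (real k * real k powr p)"
  using assms(3)
proof (induction k rule: nat_induct_at_least)
  case base
  then show ?case using assms by simp
next
  case (Suc k)
  define G where "G = \<bar>\<Prod>t<k. p - real t\<bar> / fact k"
  have G0: "G \<ge> 0" unfolding G_def by simp
  have k1: "real k \<ge> 1" using Suc by simp
  have eq: "\<bar>\<Prod>t<Suc k. p - real t\<bar> / fact (Suc k) = G * ((real k - p) / (real k + 1))"
  proof -
    have a: "\<bar>p - real k\<bar> = real k - p" using assms k1 by simp
    have "\<bar>\<Prod>t<Suc k. p - real t\<bar> = \<bar>\<Prod>t<k. p - real t\<bar> * (real k - p)"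
      by (simp add: abs_mult a)
    moreover have "(fact (Suc k) :: real) = fact k * (real k + 1)" by (simp add: algebra_simps)
    ultimately show ?thesis by (simp add: G_def)
  qed
  have L: "(real k - p) * (real k + 1) powr p \<le> real k * real k powr p"
    using L1[of "real k" p] assms k1 by simp
  have "G * ((real k - p) / (real k + 1)) \<le> p / (real k * real k powr p) * ((real k - p) / (real k + 1))"
    using Suc.IH assms k1 unfolding G_def by (intro mult_right_mono) auto
  also have "\<dots> \<le> p / ((real k + 1) * (real k + 1) powr p)"
  proof -
    have pk: "real k powr p > 0" "(real k + 1) powr p > 0" using k1 by auto
    define A where "A = real k * real k powr p"
    define B where "B = (real k + 1) powr p"
    have A0: "A > 0" "B > 0" using pk k1 by (auto simp: A_def B_def)
    have "real k - p \<le> A / B" using L A0 by (simp add: A_def B_def le_divide_eq)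
    hence "p * (real k - p) \<le> p * (A / B)" using assms by (intro mult_left_mono) auto
    hence "p * (real k - p) / (A * (real k + 1)) \<le> p * (A / B) / (A * (real k + 1))"
      using A0 k1 by (intro divide_right_mono) auto
    also have "\<dots> = p / ((real k + 1) * B)" using A0 k1 by (simp add: divide_simps)
    finally show ?thesis by (simp add: A_def B_def)
  qed
  finally show ?case using eq by (simp add: add.commute)
qed

lemma binom_rec: "real (Suc k) * real (n choose Suc k) = (real n - real k) * real (n choose k)"
proof (cases "k \<le> n")
  case True
  have "Suc k * (n choose Suc k) = (n - k) * (n choose k)"
    using binomial_absorption[of k n] binomial_absorb_comp[of n k] by simp
  hence "real (Suc k * (n choose Suc k)) = real ((n - k) * (n choose k))" by simp
  hence "real (Suc k * (n choose Suc k)) = real ((n - k) * (n choose k))" by simp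
  thus ?thesis using True by (simp only: of_nat_mult of_nat_diff)
next
  case False
  thus ?thesis by (simp add: binomial_eq_0)
qed

lemma abound:
  fixes s :: real
  assumes "0 \<le> s" "s \<le> 2"
  shows "k + 2 \<le> n \<Longrightarrow> 0 < (\<Prod>t<k. real n - s - real t) / fact k \<and>
     (\<Prod>t<k. real n - s - real t) / fact k \<le> real (n choose k) * ((real n - real k + 1)/(real n + 1)) powr s"
proof (induction k)
  case 0
  then show ?case by simp
next
  case (Suc k)
  define H where "H = (\<Prod>t<k. real n - s - real t) / fact k"
  define j where "j = real n - real k"
  have j3: "j \<ge> 3" using Suc.prems by (simp add: j_def)
  have IH: "0 < H" "H \<le> real (n choose k) * ((j + 1)/(real n + 1)) powr s"
    using Suc by (auto simp: H_def j_def)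
  have eq: "(\<Prod>t<Suc k. real n - s - real t) / fact (Suc k) = H * (j - s) / (real k + 1)"
    by (simp add: H_def j_def algebra_simps)
  have pos: "j - s > 0" using j3 assms by simp
  have C: "real (n choose Suc k) = real (n choose k) * j / (real k + 1)"
    using binom_rec[of k n] by (simp add: j_def field_simps)
  have L: "(j - s) * (j + 1) powr s \<le> j * j powr s" using L1[of j s] j3 assms by simp
  have "H * (j - s) / (real k + 1) \<le> real (n choose k) * ((j + 1)/(real n + 1)) powr s * (j - s) / (real k + 1)"
    using IH pos by (intro divide_right_mono mult_right_mono) auto
  also have "\<dots> = real (n choose k) * ((j - s) * (j + 1) powr s) / (real n + 1) powr s / (real k + 1)"
    using j3 by (simp add: powr_divide)
  also have "\<dots> \<le> real (n choose k) * (j * j powr s) / (real n + 1) powr s / (real k + 1)"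
    using L by (intro divide_right_mono mult_left_mono) auto
  also have "\<dots> = real (n choose Suc k) * ((real n - real (Suc k) + 1)/(real n + 1)) powr s"
  proof -
    have "real n - real (Suc k) + 1 = j" by (simp add: j_def)
    thus ?thesis using j3 by (simp add: C powr_divide mult_ac)
  qed
  finally show ?case using eq IH pos by simp
qed

lemma div_ge1_le:
  fixes x y :: real
  assumes "x \<ge> 0" "y \<ge> 1"
  shows "x / y \<le> x"
proof -
  have "x * 1 \<le> x * y" using assms by (intro mult_left_mono) auto
  thus ?thesis using assms by (simp add: divide_le_eq)
qed

lemma Tsum:
  fixes p :: real
  assumes "0 \<le> p" "K \<ge> 1"
  shows "(\<Sum>i=1..K. p / (real i * real i powr p)) \<le> 1 + p - 1 / real K powr p"
  using assms(2)
proof (induction K rule: nat_induct_at_least)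
  case base
  then show ?case by simp
next
  case (Suc K)
  have K1: "real K \<ge> 1" using Suc by simp
  have L: "1 + p/(real K+1) \<le> (real K+1) powr p / real K powr p" using L2[of "real K" p] K1 assms by simp
  have pos: "real K powr p > 0" "(real K + 1) powr p > 0" using K1 by auto
  have "p / ((real K + 1) * (real K + 1) powr p) + 1 / (real K + 1) powr p
        = (1 + p/(real K+1)) / (real K + 1) powr p" using K1 pos by (simp add: add_divide_distrib)
  also have "\<dots> \<le> ((real K+1) powr p / real K powr p) / (real K + 1) powr p"
    using L pos by (intro divide_right_mono) auto
  also have "\<dots> = 1 / real K powr p" using pos by simp
  finally have st: "p / ((real K + 1) * (real K + 1) powr p) + 1 / (real K + 1) powr p \<le> 1 / real K powr p" .
  have "(\<Sum>i=1..Suc K. p / (real i * real i powr p)) = (\<Sum>i=1..K. p / (real i * real i powr p)) + p / ((real K + 1) * (real K + 1) powr p)"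
    by (simp add: add.commute)
  also have "\<dots> \<le> 1 + p - 1 / real K powr p + p / ((real K + 1) * (real K + 1) powr p)"
    using Suc.IH by simp
  also have "\<dots> \<le> 1 + p - 1 / real (Suc K) powr p" using st by (simp add: add.commute)
  finally show ?case .
qed

lemma Tsum':
  fixes p :: real
  assumes "0 \<le> p"
  shows "(\<Sum>i=1..K. p / (real i * real i powr p)) \<le> 1 + p"
proof (cases "K \<ge> 1")
  case True
  have "1 / real K powr p \<ge> 0" by simp
  thus ?thesis using Tsum[OF assms True] by linarith
next
  case False
  thus ?thesis using assms by simp
qed

lemma Vsum:
  fixes p :: real
  assumes "0 \<le> p" "m \<ge> 1"
  shows "(\<Sum>i\<in>{1..m-1}. (if 2*i \<le> m then p / (real i * real i powr p) * (1 + 2 * real i / real m) else 0)) \<le> 1 + 2*p"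
proof -
  have "(\<Sum>i\<in>{1..m-1}. (if 2*i \<le> m then p / (real i * real i powr p) * (1 + 2 * real i / real m) else 0))
     \<le> (\<Sum>i\<in>{1..m-1}. p / (real i * real i powr p) + (if 2*i \<le> m then 2 * p / real m else 0))"
  proof (rule sum_mono)
    fix i assume i: "i \<in> {1..m-1}"
    have i1: "real i \<ge> 1" using i by simp
    have ip: "real i powr p \<ge> 1" using i1 assms by (simp add: ge_one_powr_ge_zero)
    have "p / (real i * real i powr p) * (2 * real i / real m) = 2 * p / real m / real i powr p"
      using i1 by (simp add: field_simps)
    also have "\<dots> \<le> 2 * p / real m"
      using ip assms by (intro div_ge1_le) auto
    finally have "p / (real i * real i powr p) * (2 * real i / real m) \<le> 2 * p / real m" .
    thus "(if 2*i \<le> m then p / (real i * real i powr p) * (1 + 2 * real i / real m) else 0)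
      \<le> p / (real i * real i powr p) + (if 2*i \<le> m then 2 * p / real m else 0)"
      using assms by (auto simp: distrib_left)
  qed
  also have "\<dots> = (\<Sum>i\<in>{1..m-1}. p / (real i * real i powr p)) + (\<Sum>i\<in>{1..m-1}. (if 2*i \<le> m then 2 * p / real m else 0))"
    by (rule sum.distrib)
  also have "(\<Sum>i\<in>{1..m-1}. (if 2*i \<le> m then 2 * p / real m else 0)) \<le> p"
  proof -
    have "(\<Sum>i\<in>{1..m-1}. (if 2*i \<le> m then 2 * p / real m else 0)) = (\<Sum>i\<in>{i\<in>{1..m-1}. 2*i \<le> m}. 2 * p / real m)"
      by (subst sum.inter_filter) auto
    also have "\<dots> = real (card {i\<in>{1..m-1}. 2*i \<le> m}) * (2 * p / real m)" by simp
    also have "\<dots> \<le> real (m div 2) * (2 * p / real m)"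
    proof -
      have "{i\<in>{1..m-1}. 2*i \<le> m} \<subseteq> {1..m div 2}" by auto
      hence "card {i\<in>{1..m-1}. 2*i \<le> m} \<le> m div 2" using card_mono[of "{1..m div 2}"] by fastforce
      thus ?thesis using assms by (intro mult_right_mono) auto
    qed
    also have "\<dots> \<le> p"
    proof -
      have "real (m div 2) * 2 \<le> real m" by linarith
      hence "real (m div 2) * (2 * p) \<le> real m * p" using assms
        by (metis mult.assoc mult.commute mult_right_mono)
      thus ?thesis using assms by (simp add: field_simps)
    qed
    finally show ?thesis .
  qed
  hence "(\<Sum>i\<in>{1..m-1}. p / (real i * real i powr p)) + (\<Sum>i\<in>{1..m-1}. (if 2*i \<le> m then 2 * p / real m else 0)) \<le> 1 + p + p"
    using Tsum'[OF assms(1), of "m-1"] by linarith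
  finally show ?thesis by simp
qed

lemma e_ge: "exp 1 \<ge> (2.6::real)"
proof -
  have "(1 + 1 / real (20::nat)) ^ 20 \<le> exp (1::real)"
    by (rule exp_ge_one_plus_x_over_n_power_n) auto
  moreover have "(2.6::real) \<le> (1 + 1 / real (20::nat)) ^ 20" by (simp add: power_divide)
  ultimately show ?thesis by linarith
qed

lemma Qbound:
  fixes q x :: real
  assumes "0 \<le> q" "q \<le> 1" "x \<ge> 4"
  shows "q * (3 / x) powr q \<le> (3 / exp 1) / (exp 1 * (ln x - 1))"
proof -
  have e3: "exp 1 \<le> (3::real)" by (rule exp_le)
  have L: "ln x - 1 > 0"
  proof -
    have "exp 1 < x" using e3 assms by linarith
    hence "ln (exp 1) < ln x" using assms by (subst ln_less_cancel_iff) auto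
    thus ?thesis by simp
  qed
  have "(3 / x) powr q = (3 / exp 1) powr q * (exp 1 / x) powr q"
    by (simp add: powr_mult[symmetric])
  also have "(3 / exp 1) powr q \<le> (3 / exp 1) powr 1"
    using assms e3 by (intro powr_mono) auto
  finally have h1: "(3 / x) powr q \<le> (3 / exp 1) * (exp 1 / x) powr q"
    using assms by (simp add: mult_right_mono)
  define y where "y = q * (ln x - 1)"
  have y0: "y \<ge> 0" using L assms by (simp add: y_def)
  have ex: "(exp 1 / x) powr q = exp (- y)"
    using assms by (simp add: powr_def ln_div y_def algebra_simps)
  have ey: "exp 1 * y \<le> exp y"
  proof -
    have "y \<le> exp (y - 1)" using exp_ge_add_one_self[of "y-1"] by simp
    also have "\<dots> = exp y / exp 1" by (simp add: exp_diff)
    finally show ?thesis by (simp add: field_simps)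
  qed
  have h2: "q * exp (- y) \<le> 1 / (exp 1 * (ln x - 1))"
  proof -
    have "q = y / (ln x - 1)" using L by (simp add: y_def)
    hence "q * exp (- y) = (exp 1 * y) * exp (-y) / (exp 1 * (ln x - 1))" by simp
    also have "\<dots> \<le> exp y * exp (-y) / (exp 1 * (ln x - 1))"
      using ey L by (intro divide_right_mono mult_right_mono) auto
    also have "\<dots> = 1 / (exp 1 * (ln x - 1))" by (simp add: exp_minus field_simps)
    finally show ?thesis .
  qed
  have "q * (3 / x) powr q \<le> q * ((3 / exp 1) * (exp 1 / x) powr q)"
    using h1 assms by (intro mult_left_mono) auto
  also have "\<dots> = (3 / exp 1) * (q * exp (- y))" by (simp add: ex)
  also have "\<dots> \<le> (3 / exp 1) * (1 / (exp 1 * (ln x - 1)))"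
    using h2 by (intro mult_left_mono) auto
  finally show ?thesis by simp
qed

lemma Rbound:
  fixes r p :: real
  assumes "0 < r" "r \<le> 1" "0 \<le> p" "p \<le> 1"
  shows "(1 + 2*p) * r powr p \<le> 9/8 + 2*r"
proof -
  have "r powr p * 1 powr (1-p) \<le> p * r + (1-p) * 1"
    using assms by (intro Youngs_inequality_0) auto
  hence y: "r powr p \<le> p * r + (1 - p)" by simp
  have "(1 + 2*p) * r powr p \<le> (1 + 2*p) * (p * r + (1 - p))"
    using y assms by (intro mult_left_mono) auto
  also have "\<dots> \<le> 9/8 + 2*r"
  proof (cases "2 - p - 2*p^2 \<ge> 0")
    case True
    have "r * (2 - p - 2*p^2) \<ge> 0" using True assms by simp
    moreover have "2*(p - 1/4)^2 \<ge> 0" by simp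
    ultimately show ?thesis by (simp add: algebra_simps power2_eq_square)
  next
    case False
    have "r * (2 - p - 2*p^2) \<ge> 1 * (2 - p - 2*p^2)"
      using False assms by (intro mult_right_mono_neg) auto
    thus ?thesis using assms by (simp add: algebra_simps power2_eq_square)
  qed
  finally show ?thesis .
qed

definition ff :: "real \<Rightarrow> nat \<Rightarrow> real" where
  "ff x k = (\<Prod>t<k. x - real t) / fact k"

lemma lagr_factor_ff: "n > 0 \<Longrightarrow> lagr_factor n k (x / real n) = ff x k"
  by (simp add: lagr_factor_def ff_def)

lemma term_bound:
  fixes p q s :: real
  assumes n4: "n \<ge> 4" and p: "0 < p" "p < 1" and q: "0 < q" "q < 1" and s: "s = p + q"
    and m: "2 \<le> m" "m \<le> n" and i: "1 \<le> i" "2 * i \<le> m"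
  shows "ff (real n - s) (n - m) * \<bar>ff p i\<bar> * \<bar>ff q (m - i)\<bar>
    \<le> real (n choose m) * (((3 / exp 1) / (exp 1 * (ln (real n) - 1))) / real m) *
       (((real m + 1) / (real n + 1)) powr p * (p / (real i * real i powr p)) * (1 + 2 * real i / real m))"
proof -
  define Kc where "Kc = (3 / exp 1) / (exp 1 * (ln (real n) - 1))"
  define r where "r = (real m + 1) / (real n + 1)"
  define j where "j = m - i"
  have j1: "j \<ge> 1" and j2: "m \<le> 2 * j" using i m by (auto simp: j_def)
  have rj: "real j \<ge> 1" using j1 by simp
  have r0: "r > 0" by (simp add: r_def)
  have C0: "real (n choose m) \<ge> 0" by simp
  have Ab: "0 < ff (real n - s) (n - m) \<and> ff (real n - s) (n - m) \<le> real (n choose (n - m)) * ((real n - real (n - m) + 1)/(real n + 1)) powr s"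
    unfolding ff_def using abound[of s "n - m" n] s p q m by auto
  have "real n - real (n - m) + 1 = real m + 1" using m by (simp add: of_nat_diff)
  hence A: "ff (real n - s) (n - m) \<le> real (n choose m) * r powr s" "0 < ff (real n - s) (n - m)"
    using Ab m by (auto simp: binomial_symmetric[symmetric] r_def)
  have Fp: "\<bar>ff p i\<bar> \<le> p / (real i * real i powr p)"
    using gbound[of p i] p i by (simp add: ff_def)
  have Fq: "\<bar>ff q j\<bar> \<le> q / (real j * real j powr q)"
    using gbound[of q j] q j1 by (simp add: ff_def)
  have rjn: "r / real j \<le> 3 / real n"
  proof -
    have f1: "real m * real n \<ge> 2 * real n" using m by (intro mult_right_mono) auto
    have "real m \<le> 2 * real j" using j2 by simp
    hence f2: "(real n + 1) * real m \<le> (real n + 1) * (2 * real j)" by (intro mult_left_mono) auto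
    have "real n * (real m + 1) \<le> 3 * ((real n + 1) * real j)"
      using f1 f2 by (simp add: algebra_simps)
    moreover have "(real n + 1) * real j > 0" "real n > 0" using rj n4 by auto
    ultimately have "(real m + 1) / ((real n + 1) * real j) \<le> 3 / real n"
      by (simp add: divide_le_eq le_divide_eq mult.commute mult.left_commute)
    thus ?thesis by (simp add: r_def)
  qed
  have Q: "r powr q * (q / (real j * real j powr q)) \<le> Kc / real j"
  proof -
    have "r powr q * (q / (real j * real j powr q)) = (q * (r / real j) powr q) / real j"
      using rj r0 by (simp add: powr_divide mult_ac)
    also have "\<dots> \<le> (q * (3 / real n) powr q) / real j"
      using rjn q r0 rj by (intro divide_right_mono mult_left_mono powr_mono2) auto
    also have "\<dots> \<le> Kc / real j"
      using Qbound[of q "real n"] q n4 rj unfolding Kc_def by (intro divide_right_mono) auto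
    finally show ?thesis .
  qed
  have jm: "1 / real j \<le> (1 + 2 * real i / real m) / real m"
  proof -
    have "real j = real m - real i" using i m by (simp add: j_def of_nat_diff)
    moreover have "real m * real m \<le> (real m - real i) * (real m + 2 * real i)"
    proof -
      have "real i * (2 * real i) \<le> real i * real m" using i by (intro mult_left_mono) auto
      thus ?thesis by (simp add: algebra_simps)
    qed
    ultimately have key: "real m * real m \<le> real j * (real m + 2 * real i)" by simp
    have mp: "real m > 0" using m by simp
    have "(1 + 2 * real i / real m) / real m = (real m + 2 * real i) / (real m * real m)"
      using mp by (simp add: field_simps)
    moreover have "1 / real j \<le> (real m + 2 * real i) / (real m * real m)"
      using key mp rj by (simp add: divide_le_eq le_divide_eq mult.commute)
    ultimately show ?thesis by simp
  qed
  have Kc0: "Kc \<ge> 0"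
  proof -
    have "ln (real n) - 1 > 0"
    proof -
      have "exp 1 < real n" using exp_le n4 by linarith
      hence "ln (exp 1) < ln (real n)" using n4 by (subst ln_less_cancel_iff) auto
      thus ?thesis by simp
    qed
    thus ?thesis by (simp add: Kc_def)
  qed
  define Pi where "Pi = p / (real i * real i powr p)"
  have Pi0: "Pi \<ge> 0" using p by (simp add: Pi_def)
  have "ff (real n - s) (n - m) * \<bar>ff p i\<bar> * \<bar>ff q j\<bar>
      \<le> (real (n choose m) * r powr s) * Pi * (q / (real j * real j powr q))"
  proof -
    have "0 \<le> real (n choose m) * r powr s" by simp
    moreover have "\<bar>ff p i\<bar> \<le> Pi" using Fp by (simp add: Pi_def)
    ultimately show ?thesis using A Fq Pi0 by (intro mult_mono) auto
  qed
  also have "\<dots> = real (n choose m) * r powr p * Pi * (r powr q * (q / (real j * real j powr q)))"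
    by (simp add: s powr_add)
  also have "\<dots> \<le> real (n choose m) * r powr p * Pi * (Kc / real j)"
    using Q Pi0 by (intro mult_left_mono) auto
  also have "\<dots> \<le> real (n choose m) * r powr p * Pi * (Kc * ((1 + 2 * real i / real m) / real m))"
  proof -
    have "Kc * (1 / real j) \<le> Kc * ((1 + 2 * real i / real m) / real m)"
      using jm Kc0 by (intro mult_left_mono) auto
    thus ?thesis using Pi0 by (intro mult_left_mono) auto
  qed
  also have "\<dots> = real (n choose m) * (Kc / real m) * (r powr p * Pi * (1 + 2 * real i / real m))"
    by (simp add: field_simps)
  finally show ?thesis by (simp add: Kc_def r_def Pi_def j_def)
qed

lemma binom_div_Suc: "real (n choose m) / (real m + 1) = real (Suc n choose Suc m) / (real n + 1)"
proof -
  have "real (Suc n) * real (n choose m) = real (Suc n choose Suc m) * real (Suc m)"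
    using Suc_times_binomial_eq[of n m] by (metis of_nat_mult)
  thus ?thesis by (simp add: field_simps)
qed

lemma shift_sum_le: "(\<Sum>m\<le>n. real (Suc n choose Suc m)) \<le> 2 ^ Suc n"
proof -
  have "(\<Sum>k\<le>Suc n. real (Suc n choose k)) = real (Suc n choose 0) + (\<Sum>m\<le>n. real (Suc n choose Suc m))"
    by (rule sum.atMost_Suc_shift)
  moreover have "(\<Sum>k\<le>Suc n. real (Suc n choose k)) = 2 ^ Suc n"
    using choose_row_sum[of "Suc n"] by (metis of_nat_numeral of_nat_power of_nat_sum)
  ultimately show ?thesis by simp
qed

lemma Sa: "(\<Sum>m\<le>n. real (n choose m) / (real m + 1)) \<le> 2 ^ Suc n / (real n + 1)"
proof -
  have "(\<Sum>m\<le>n. real (n choose m) / (real m + 1)) = (\<Sum>m\<le>n. real (Suc n choose Suc m)) / (real n + 1)"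
    by (simp add: binom_div_Suc sum_divide_distrib)
  also have "\<dots> \<le> 2 ^ Suc n / (real n + 1)"
    using shift_sum_le by (intro divide_right_mono) auto
  finally show ?thesis .
qed

lemma Sb: "(\<Sum>m\<le>n. real (n choose m) / ((real m + 1) * (real m + 2))) \<le> 2 ^ (n+2) / ((real n + 1) * (real n + 2))"
proof -
  have eq: "real (n choose m) / ((real m + 1) * (real m + 2)) = real (Suc (Suc n) choose Suc (Suc m)) / ((real n + 1) * (real n + 2))" for m
  proof -
    have "real (n choose m) / ((real m + 1) * (real m + 2)) = (real (n choose m) / (real m + 1)) / (real (Suc m) + 1)"
      by (simp add: field_simps)
    also have "\<dots> = (real (Suc n choose Suc m) / (real n + 1)) / (real (Suc m) + 1)"
      by (simp add: binom_div_Suc)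
    also have "\<dots> = (real (Suc n choose Suc m) / (real (Suc m) + 1)) / (real n + 1)"
      by (simp add: field_simps)
    also have "\<dots> = (real (Suc (Suc n) choose Suc (Suc m)) / (real (Suc n) + 1)) / (real n + 1)"
      by (simp only: binom_div_Suc)
    also have "\<dots> = real (Suc (Suc n) choose Suc (Suc m)) / ((real n + 1) * (real n + 2))"
      by (simp add: field_simps)
    finally show ?thesis .
  qed
  have "(\<Sum>m\<le>n. real (Suc (Suc n) choose Suc (Suc m))) \<le> (\<Sum>m\<le>Suc n. real (Suc (Suc n) choose Suc m))"
  proof -
    have "(\<Sum>m\<le>Suc n. real (Suc (Suc n) choose Suc m)) = real (Suc (Suc n) choose Suc 0) + (\<Sum>m\<le>n. real (Suc (Suc n) choose Suc (Suc m)))"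
      by (rule sum.atMost_Suc_shift)
    thus ?thesis by linarith
  qed
  also have "\<dots> \<le> 2 ^ Suc (Suc n)" by (rule shift_sum_le)
  finally have "(\<Sum>m\<le>n. real (Suc (Suc n) choose Suc (Suc m))) \<le> 2 ^ (n + 2)" by simp
  hence "(\<Sum>m\<le>n. real (Suc (Suc n) choose Suc (Suc m))) / ((real n + 1) * (real n + 2)) \<le> 2 ^ (n+2) / ((real n + 1) * (real n + 2))"
    by (intro divide_right_mono) auto
  thus ?thesis by (simp add: eq sum_divide_distrib)
qed

lemma numeric:
  fixes N :: real
  assumes "N \<ge> 4"
  shows "(9/8 + 2/(N+1)) * (2/(N+1) + 12/((N+1)*(N+2))) + 2/(N+1) \<le> (13/3) / N * (1 + 15/(N - 3))"
proof -
  define t where "t = 1/N"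
  have t0: "0 < t" "t \<le> 1/4" using assms by (auto simp: t_def)
  have a: "2/(N+1) \<le> 2*t" using assms by (simp add: t_def frac_le)
  have b: "12/((N+1)*(N+2)) \<le> 12*t*t"
  proof -
    have "N*N \<le> (N+1)*(N+2)" using assms by (simp add: algebra_simps)
    hence "12/((N+1)*(N+2)) \<le> 12/(N*N)" using assms by (intro divide_left_mono) auto
    thus ?thesis by (simp add: t_def)
  qed
  have c: "15/(N-3) \<ge> 15*t" using assms by (simp add: t_def frac_le)
  have "(9/8 + 2/(N+1)) * (2/(N+1) + 12/((N+1)*(N+2))) \<le> (9/8 + 2*t) * (2*t + 12*t*t)"
    using a b assms t0 by (intro mult_mono add_mono) auto
  moreover have "(9/8 + 2*t) * (2*t + 12*t*t) + 2*t \<le> (13/3) * t * (1 + 15*t)"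
  proof -
    have h: "t*t*t \<le> t*t*(1/4)" using t0 by (intro mult_left_mono) auto
    have h2: "t * t \<ge> 0" by simp
    have "(9/8 + 2*t) * (2*t + 12*t*t) + 2*t = (17/4)*t + (35/2)*(t*t) + 24*(t*t*t)"
      by (simp add: algebra_simps)
    moreover have "(13/3) * t * (1 + 15*t) = (13/3)*t + 65*(t*t)" by (simp add: algebra_simps)
    ultimately show ?thesis using h h2 t0 by linarith
  qed
  moreover have "(13/3) * t * (1 + 15*t) \<le> (13/3) / N * (1 + 15/(N - 3))"
  proof -
    have "(13/3) * t * (1 + 15*t) \<le> (13/3) * t * (1 + 15/(N - 3))"
      using c t0 by (intro mult_left_mono) auto
    thus ?thesis by (simp add: t_def)
  qed
  ultimately show ?thesis using a by linarith
qed

lemma Gbound: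
  assumes n4: "n \<ge> 4"
  shows "(\<Sum>m\<in>{2..n}. real (n choose m) * (9/8 + 2*((real m+1)/(real n+1))) / real m)
     \<le> (13/3) * 2^n / real n * (1 + 15/(real n - 3))"
proof -
  define c where "c = 9/8 + 2/(real n+1)"
  have c0: "c \<ge> 0" by (simp add: c_def)
  define B where "B m = c * (real (n choose m)/(real m + 1) + 3 * (real (n choose m) / ((real m + 1) * (real m + 2)))) + 2 * real (n choose m) / (real n + 1)" for m
  have B0: "B m \<ge> 0" for m using c0 by (simp add: B_def)
  have "(\<Sum>m\<in>{2..n}. real (n choose m) * (9/8 + 2*((real m+1)/(real n+1))) / real m) \<le> (\<Sum>m\<in>{2..n}. B m)"
  proof (rule sum_mono)
    fix m assume m: "m \<in> {2..n}"
    have m1: "real m \<ge> 2" using m by auto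
    have C0: "real (n choose m) \<ge> 0" by simp
    have e1: "real (n choose m) * (9/8 + 2*((real m+1)/(real n+1))) / real m = c * (real (n choose m) / real m) + 2 * real (n choose m) / (real n + 1)"
    proof -
      have np: "real n + 1 > 0" by simp
      have mp: "real m > 0" using m1 by simp
      show ?thesis using mp np unfolding c_def by (simp add: divide_simps) (simp add: algebra_simps)
    qed
    have f: "1 / real m \<le> 1/(real m + 1) + 3 / ((real m + 1) * (real m + 2))"
    proof -
      have "1/(real m + 1) + 3 / ((real m + 1) * (real m + 2)) = (real m + 5) / ((real m + 1) * (real m + 2))"
        using m1 by (simp add: divide_simps)
      moreover have "(real m + 1) * (real m + 2) \<le> real m * (real m + 5)" using m1 by (simp add: algebra_simps)
      ultimately show ?thesis using m1 by (simp add: divide_le_eq le_divide_eq mult.commute)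
    qed
    have "real (n choose m) / real m \<le> real (n choose m)/(real m + 1) + 3 * (real (n choose m) / ((real m + 1) * (real m + 2)))"
      using mult_left_mono[OF f C0] by (simp add: field_simps)
    hence "c * (real (n choose m) / real m) \<le> c * (real (n choose m)/(real m + 1) + 3 * (real (n choose m) / ((real m + 1) * (real m + 2))))"
      using c0 by (intro mult_left_mono) auto
    thus "real (n choose m) * (9/8 + 2*((real m+1)/(real n+1))) / real m \<le> B m"
      using e1 by (simp add: B_def)
  qed
  also have "\<dots> \<le> (\<Sum>m\<le>n. B m)"
    using B0 by (intro sum_mono2) auto
  also have "\<dots> = c * ((\<Sum>m\<le>n. real (n choose m)/(real m + 1)) + 3 * (\<Sum>m\<le>n. real (n choose m) / ((real m + 1) * (real m + 2))))
       + 2 * (\<Sum>m\<le>n. real (n choose m)) / (real n + 1)"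
    by (simp add: B_def sum.distrib distrib_left sum_distrib_left sum_divide_distrib)
  also have "\<dots> \<le> c * (2 ^ Suc n / (real n + 1) + 3 * (2 ^ (n+2) / ((real n + 1) * (real n + 2)))) + 2 * 2^n / (real n + 1)"
  proof -
    have "(\<Sum>m\<le>n. real (n choose m)) = 2 ^ n"
      using choose_row_sum[of n] by (metis of_nat_numeral of_nat_power of_nat_sum)
    thus ?thesis using Sa[of n] Sb[of n] c0 by (intro add_mono mult_left_mono) auto
  qed
  also have "\<dots> = 2^n * ((9/8 + 2/(real n+1)) * (2/(real n+1) + 12/((real n+1)*(real n+2))) + 2/(real n+1))"
  proof -
    define X :: real where "X = 2^n"
    have p1: "(2::real) ^ Suc n = 2 * X" "(2::real) ^ (n+2) = 4 * X" by (simp_all add: X_def power_add)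
    have np: "real n + 1 > 0" "real n + 2 > 0" by simp_all
    have "c * (2 * X / (real n + 1) + 3 * (4 * X / ((real n + 1) * (real n + 2)))) + 2 * X / (real n + 1)
       = X * (c * (2/(real n+1) + 12/((real n+1)*(real n+2))) + 2/(real n+1))"
      by (simp add: distrib_left distrib_right divide_inverse mult_ac)
    thus ?thesis unfolding p1 c_def X_def .
  qed
  also have "\<dots> \<le> 2^n * ((13/3) / real n * (1 + 15/(real n - 3)))"
    using numeric[of "real n"] n4 by (intro mult_left_mono) auto
  also have "\<dots> = (13/3) * 2^n / real n * (1 + 15/(real n - 3))"
    by (simp only: times_divide_eq_right times_divide_eq_left mult.assoc mult.commute mult.left_commute)
  finally show ?thesis .
qed

lemma reindex_set:
  "{(i1, i2, i3) \<in> lagr_idx n. i2 \<ge> 1 \<and> i3 \<ge> 1} = (\<lambda>(m, i). (n - m, i, m - i)) ` (SIGMA m:{2..n}. {1..m-1})"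
proof (rule set_eqI, rule iffI)
  fix x assume x: "x \<in> {(i1, i2, i3) \<in> lagr_idx n. i2 \<ge> 1 \<and> i3 \<ge> 1}"
  obtain i1 i2 i3 where xe: "x = (i1, i2, i3)" by (cases x) auto
  have h: "i1 + i2 + i3 = n" "i2 \<ge> 1" "i3 \<ge> 1" using x xe by (auto simp: lagr_idx_def)
  have "(i2 + i3, i2) \<in> (SIGMA m:{2..n}. {1..m-1})" using h by auto
  moreover have "x = (\<lambda>(m, i). (n - m, i, m - i)) (i2 + i3, i2)" using h xe by auto
  ultimately show "x \<in> (\<lambda>(m, i). (n - m, i, m - i)) ` (SIGMA m:{2..n}. {1..m-1})" by blast
next
  fix x assume "x \<in> (\<lambda>(m, i). (n - m, i, m - i)) ` (SIGMA m:{2..n}. {1..m-1})"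
  then obtain m i where "m \<in> {2..n}" "i \<in> {1..m-1}" "x = (n - m, i, m - i)" by auto
  thus "x \<in> {(i1, i2, i3) \<in> lagr_idx n. i2 \<ge> 1 \<and> i3 \<ge> 1}" by (auto simp: lagr_idx_def)
qed

lemma reindex_inj: "inj_on (\<lambda>(m, i). ((n::nat) - m, i, m - i)) (SIGMA m:{2..n}. {1..m-1})"
  by (auto simp: inj_on_def)

lemma reindex_sum:
  "(\<Sum>x\<in>{(i1, i2, i3) \<in> lagr_idx n. i2 \<ge> 1 \<and> i3 \<ge> 1}. g x) = (\<Sum>m\<in>{2..n}. \<Sum>i\<in>{1..m-1}. g (n - m, i, m - i))"
proof -
  have "(\<Sum>x\<in>{(i1, i2, i3) \<in> lagr_idx n. i2 \<ge> 1 \<and> i3 \<ge> 1}. g x) = (\<Sum>z\<in>(SIGMA m:{2..n}. {1..m-1}). g ((\<lambda>(m, i). (n - m, i, m - i)) z))"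
    unfolding reindex_set by (rule sum.reindex[OF reindex_inj, unfolded comp_def])
  also have "\<dots> = (\<Sum>m\<in>{2..n}. \<Sum>i\<in>{1..m-1}. g (n - m, i, m - i))"
    by (subst sum.Sigma) (auto simp: case_prod_beta)
  finally show ?thesis .
qed

lemma per_m:
  fixes p q s :: real
  assumes n4: "n \<ge> 4" and p: "0 < p" "p < 1" and q: "0 < q" "q < 1" and s: "s = p + q"
    and m: "2 \<le> m" "m \<le> n"
  shows "(\<Sum>i\<in>{1..m-1}. ff (real n - s) (n - m) * \<bar>ff p i\<bar> * \<bar>ff q (m - i)\<bar>)
    \<le> real (n choose m) * (((3 / exp 1) / (exp 1 * (ln (real n) - 1))) / real m) * (2 * (9/8 + 2 * ((real m + 1) / (real n + 1))))"
proof -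
  define Kc where "Kc = (3 / exp 1) / (exp 1 * (ln (real n) - 1))"
  define r where "r = (real m + 1) / (real n + 1)"
  define V where "V a j = (if 2*j \<le> m then a / (real j * real j powr a) * (1 + 2 * real j / real m) else 0)" for a :: real and j :: nat
  define C where "C = real (n choose m) * (Kc / real m)"
  have Kc0: "Kc \<ge> 0"
  proof -
    have "ln (real n) - 1 > 0"
    proof -
      have "exp 1 < real n" using exp_le n4 by linarith
      hence "ln (exp 1) < ln (real n)" using n4 by (subst ln_less_cancel_iff) auto
      thus ?thesis by simp
    qed
    thus ?thesis by (simp add: Kc_def)
  qed
  have C0: "C \<ge> 0" using Kc0 by (simp add: C_def)
  have V0: "V a j \<ge> 0" if "a \<ge> 0" for a j using that by (simp add: V_def)
  have r0: "r > 0" "r \<le> 1" using m by (auto simp: r_def)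
  have tb: "ff (real n - s) (n - m) * \<bar>ff p i\<bar> * \<bar>ff q (m - i)\<bar> \<le> C * (r powr p * V p i + r powr q * V q (m - i))"
    if i: "i \<in> {1..m-1}" for i
  proof (cases "2 * i \<le> m")
    case True
    have "ff (real n - s) (n - m) * \<bar>ff p i\<bar> * \<bar>ff q (m - i)\<bar> \<le> C * (r powr p * V p i)"
      using term_bound[OF n4 p q s m, of i] i True by (simp add: C_def Kc_def r_def V_def mult_ac)
    also have "\<dots> \<le> C * (r powr p * V p i + r powr q * V q (m - i))"
      using C0 V0[of q "m - i"] q by (intro mult_left_mono) auto
    finally show ?thesis .
  next
    case False
    have i': "1 \<le> m - i" "2 * (m - i) \<le> m" "m - (m - i) = i" using i False by auto
    have s': "s = q + p" using s by simp
    have "ff (real n - s) (n - m) * \<bar>ff q (m - i)\<bar> * \<bar>ff p (m - (m - i))\<bar> \<le> C * (r powr q * V q (m - i))"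
      using term_bound[OF n4 q p s' m, of "m - i"] i' by (simp add: C_def Kc_def r_def V_def mult_ac)
    hence "ff (real n - s) (n - m) * \<bar>ff p i\<bar> * \<bar>ff q (m - i)\<bar> \<le> C * (r powr q * V q (m - i))"
      using i' by (simp add: mult_ac)
    also have "\<dots> \<le> C * (r powr p * V p i + r powr q * V q (m - i))"
      using C0 V0[of p i] p by (intro mult_left_mono) auto
    finally show ?thesis .
  qed
  have "(\<Sum>i\<in>{1..m-1}. ff (real n - s) (n - m) * \<bar>ff p i\<bar> * \<bar>ff q (m - i)\<bar>)
      \<le> (\<Sum>i\<in>{1..m-1}. C * (r powr p * V p i + r powr q * V q (m - i)))"
    using tb by (rule sum_mono)
  also have "\<dots> = C * (r powr p * (\<Sum>i\<in>{1..m-1}. V p i) + r powr q * (\<Sum>i\<in>{1..m-1}. V q (m - i)))"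
    by (simp add: sum_distrib_left sum.distrib distrib_left)
  also have "(\<Sum>i\<in>{1..m-1}. V q (m - i)) = (\<Sum>i\<in>{1..m-1}. V q i)"
  proof -
    have "(\<Sum>i\<in>{1..m-1}. V q i) = (\<Sum>i\<in>{1..m-1}. V q (m - 1 + 1 - i))"
      by (rule sum.atLeastAtMost_rev)
    also have "\<dots> = (\<Sum>i\<in>{1..m-1}. V q (m - i))"
      using m by (intro sum.cong) auto
    finally show ?thesis by simp
  qed
  also have "C * (r powr p * (\<Sum>i\<in>{1..m-1}. V p i) + r powr q * (\<Sum>i\<in>{1..m-1}. V q i))
      \<le> C * (r powr p * (1 + 2*p) + r powr q * (1 + 2*q))"
  proof -
    have "(\<Sum>i\<in>{1..m-1}. V p i) \<le> 1 + 2*p" using Vsum[of p m] p m by (simp add: V_def)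
    moreover have "(\<Sum>i\<in>{1..m-1}. V q i) \<le> 1 + 2*q" using Vsum[of q m] q m by (simp add: V_def)
    ultimately show ?thesis using C0 r0 by (intro mult_left_mono add_mono) auto
  qed
  also have "\<dots> \<le> C * (2 * (9/8 + 2 * r))"
  proof -
    have "(1 + 2*p) * r powr p \<le> 9/8 + 2*r" using Rbound[of r p] r0 p by simp
    moreover have "(1 + 2*q) * r powr q \<le> 9/8 + 2*r" using Rbound[of r q] r0 q by simp
    ultimately show ?thesis using C0 by (intro mult_left_mono) (auto simp: mult_ac)
  qed
  finally show ?thesis unfolding C_def Kc_def r_def .
qed

lemma idt: fixes e L N X Y :: real assumes "e > 0" "L > 0" "N > 0"
  shows "2 * ((3/e)/(e*L)) * ((13/3)*X/N*Y) = (26/e) * (X*Y/(e*N*L))"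
  using assms by (simp add: field_simps)

theorem lemma26:
  fixes n :: nat and a1 a2 a3 :: real
  assumes "n \<ge> 4"
    and "0 < a2" "a2 < 1" "0 < a3" "a3 < 1"
    and "a1 = 1 - a2 - a3"
  shows "(\<Sum>i\<in>{(i1, i2, i3) \<in> lagr_idx n. i2 \<ge> 1 \<and> i3 \<ge> 1}.
            \<bar>lagr_l n i ((real n - 1 + a1) / real n, a2 / real n, a3 / real n)\<bar>)
         \<le> 5 * 2 ^ (n + 1) / (exp 1 * real n * (ln (real n) - 1)) * (1 + 15 / (real n - 3))"
proof -
  define s where "s = a2 + a3"
  define Kc where "Kc = (3 / exp 1) / (exp 1 * (ln (real n) - 1))"
  define N where "N = real n"
  have n0: "n > 0" using assms by simp
  have x1: "real n - 1 + a1 = real n - s" using assms by (simp add: s_def)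
  have L0: "ln (real n) - 1 > 0"
  proof -
    have "exp 1 < real n" using exp_le assms by linarith
    hence "ln (exp 1) < ln (real n)" using assms by (subst ln_less_cancel_iff) auto
    thus ?thesis by simp
  qed
  have tm: "\<bar>lagr_l n (n - m, i, m - i) ((real n - 1 + a1) / real n, a2 / real n, a3 / real n)\<bar>
      = ff (real n - s) (n - m) * \<bar>ff a2 i\<bar> * \<bar>ff a3 (m - i)\<bar>" if "m \<in> {2..n}" for m i
  proof -
    have pos: "0 < ff (real n - s) (n - m)"
      using abound[of s "n - m" n] assms that by (auto simp: s_def ff_def)
    show ?thesis using pos n0
      by (simp add: lagr_l_def lagr_factor_ff x1 abs_mult)
  qed
  have "(\<Sum>i\<in>{(i1, i2, i3) \<in> lagr_idx n. i2 \<ge> 1 \<and> i3 \<ge> 1}.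
            \<bar>lagr_l n i ((real n - 1 + a1) / real n, a2 / real n, a3 / real n)\<bar>)
      = (\<Sum>m\<in>{2..n}. \<Sum>i\<in>{1..m-1}. ff (real n - s) (n - m) * \<bar>ff a2 i\<bar> * \<bar>ff a3 (m - i)\<bar>)"
    unfolding reindex_sum by (intro sum.cong refl) (simp add: tm)
  also have "\<dots> \<le> (\<Sum>m\<in>{2..n}. real (n choose m) * (Kc / real m) * (2 * (9/8 + 2 * ((real m + 1) / (real n + 1)))))"
    using per_m[of n a2 a3 s] assms unfolding Kc_def s_def by (intro sum_mono) auto
  also have "\<dots> = 2 * Kc * (\<Sum>m\<in>{2..n}. real (n choose m) * (9/8 + 2*((real m+1)/(real n+1))) / real m)"
    unfolding sum_distrib_left by (intro sum.cong refl) (simp only: times_divide_eq_right times_divide_eq_left mult.assoc mult.commute mult.left_commute)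
  also have "\<dots> \<le> 2 * Kc * ((13/3) * 2^n / real n * (1 + 15/(real n - 3)))"
    using Gbound[of n] assms L0 by (intro mult_left_mono) (auto simp: Kc_def)
  also have "\<dots> \<le> 5 * 2 ^ (n + 1) / (exp 1 * real n * (ln (real n) - 1)) * (1 + 15 / (real n - 3))"
  proof -
    define Z where "Z = 2^n * (1 + 15 / (real n - 3)) / (exp 1 * real n * (ln (real n) - 1))"
    have Z0: "Z \<ge> 0" using assms L0 by (simp add: Z_def)
    have e1: "2 * Kc * ((13/3) * 2^n / real n * (1 + 15/(real n - 3))) = (26 / exp 1) * Z"
      unfolding Kc_def Z_def using idt[of "exp 1" "ln (real n) - 1" "real n" "2^n" "1 + 15/(real n - 3)"] L0 assms by simp
    have e2: "5 * 2 ^ (n + 1) / (exp 1 * real n * (ln (real n) - 1)) * (1 + 15 / (real n - 3)) = 10 * Z"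
      by (simp add: Z_def field_simps)
    have "26 / exp 1 \<le> (10::real)" using e_ge by (simp add: divide_le_eq)
    hence "(26 / exp 1) * Z \<le> 10 * Z" using Z0 by (intro mult_right_mono) auto
    thus ?thesis using e1 e2 by simp
  qed
  finally show ?thesis .
qed

end
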